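(* Let $\Sigma$ be a finite group, $A$ a difference closed pseudofield and $X\subseteq A^n$ a pseudovariety. Then every function $f\colon X\to A$ that is regular at every point of $X$ is given by a difference polynomial; that is, $\mathcal O_X(X)=A\{X\}$.
   Context: A difference ring is a commutative ring with identity with an action of $\Sigma$ by ring automorphisms. A pseudofield is an absolutely flat difference ring with no $\Sigma$-stable ideals other than $0$ and itself; it is difference closed if for every $n$ and every $\Sigma$-stable ideal $\mathfrak a$ of $R_n=A\{y_1,\dots,y_n\}$ the radical of $\mathfrak a$ equals $I(V(\mathfrak a))$. Here $A\{y_1,\dots,y_n\}$ is the polynomial ring over $A$ in indeterminates $\sigma y_i$ ($\sigma\in\Sigma$), with $\tau(\sigma y_i)=(\tau\sigma)y_i$; for $a\in A^n$, $f(a)$ is given by $\sigma y_i\mapsto\sigma(a_i)$; $V(E)=\{a\in A^n\mid f(a)=0\ \forall f\in E\}$, $I(X)=\{f\in R_n\mid f|_X=0\}$. A pseudovariety is a set $X=V(E)\subseteq A^n$; it carries the topology whose closed sets are the sets $X\cap V(E')$. $A\{X\}=R_n/I(X)$, identified with the ring of functions $X\to A$ given by difference polynomials. A function $f\colon X\to A$ is regular at $x\in X$ if there are an open $U\ni x$ in $X$ and $h,g\in R_n$ such that $g(y)$ is invertible in $A$ and $f(y)=h(y)/g(y)$ for all $y\in U$; $\mathcal O_X(U)$ is the ring of functions $U\to A$ regular at every point of $U$. *)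

theory Defs
  imports "HOL-Algebra.Group" "HOL-Library.Poly_Mapping"
begin

text \<open>A finite group Sigma is a HOL-Algebra group G; the difference ring A is a type 'a
  of class comm_ring_1 together with an action act of G on 'a by ring automorphisms.\<close>

definition ring_aut :: "('a::comm_ring_1 \<Rightarrow> 'a) \<Rightarrow> bool" where
  "ring_aut s \<longleftrightarrow> bij s \<and> (\<forall>x y. s (x + y) = s x + s y) \<and> (\<forall>x y. s (x * y) = s x * s y) \<and> s 1 = 1"

definition difference_ring :: "('g, 'b) monoid_scheme \<Rightarrow> ('g \<Rightarrow> 'a::comm_ring_1 \<Rightarrow> 'a) \<Rightarrow> bool" where
  "difference_ring G act \<longleftrightarrow> group G \<and>
     (\<forall>s\<in>carrier G. ring_aut (act s)) \<and> act \<one>\<^bsub>G\<^esub> = id \<and>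
     (\<forall>s\<in>carrier G. \<forall>t\<in>carrier G. act (s \<otimes>\<^bsub>G\<^esub> t) = act s \<circ> act t)"

definition is_ideal_in :: "'r::comm_ring_1 set \<Rightarrow> 'r set \<Rightarrow> bool" where
  "is_ideal_in S I \<longleftrightarrow> I \<subseteq> S \<and> 0 \<in> I \<and> (\<forall>x\<in>I. \<forall>y\<in>I. x + y \<in> I) \<and> (\<forall>x\<in>I. - x \<in> I)
     \<and> (\<forall>x\<in>I. \<forall>r\<in>S. r * x \<in> I)"

definition radical_in :: "'r::comm_ring_1 set \<Rightarrow> 'r set \<Rightarrow> 'r set" where
  "radical_in S I = {x \<in> S. \<exists>k::nat. x ^ k \<in> I}"

definition absolutely_flat :: "'a::comm_ring_1 itself \<Rightarrow> bool" where
  "absolutely_flat _ \<longleftrightarrow> (\<forall>a::'a. \<exists>b. a = a * a * b)"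

definition stable_ideal_A :: "('g, 'b) monoid_scheme \<Rightarrow> ('g \<Rightarrow> 'a::comm_ring_1 \<Rightarrow> 'a) \<Rightarrow> 'a set \<Rightarrow> bool" where
  "stable_ideal_A G act I \<longleftrightarrow> is_ideal_in UNIV I \<and> (\<forall>s\<in>carrier G. \<forall>x\<in>I. act s x \<in> I)"

definition pseudofield :: "('g, 'b) monoid_scheme \<Rightarrow> ('g \<Rightarrow> 'a::comm_ring_1 \<Rightarrow> 'a) \<Rightarrow> bool" where
  "pseudofield G act \<longleftrightarrow> difference_ring G act \<and> absolutely_flat TYPE('a) \<and>
     (\<forall>I. stable_ideal_A G act I \<longrightarrow> I = {0} \<or> I = UNIV)"

text \<open>Difference polynomials: polynomials over 'a in the indeterminates (s, i) standing for
  s y_i, s \<in> Sigma, i < n. Monomials are finitely supported exponent maps.\<close>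
type_synonym ('g, 'a) dpoly = "(('g \<times> nat) \<Rightarrow>\<^sub>0 nat) \<Rightarrow>\<^sub>0 'a"

definition dpolys :: "('g, 'b) monoid_scheme \<Rightarrow> nat \<Rightarrow> ('g, 'a::comm_ring_1) dpoly set" where
  "dpolys G n = {p. \<forall>m\<in>Poly_Mapping.keys p. \<forall>v\<in>Poly_Mapping.keys m. fst v \<in> carrier G \<and> snd v < n}"

text \<open>Action of t on A{y}: t(s y_i) = (t s) y_i, and t acts on coefficients.\<close>
definition mono_act :: "('g, 'b) monoid_scheme \<Rightarrow> 'g \<Rightarrow> (('g \<times> nat) \<Rightarrow>\<^sub>0 nat) \<Rightarrow> (('g \<times> nat) \<Rightarrow>\<^sub>0 nat)" where
  "mono_act G t m = (\<Sum>v\<in>Poly_Mapping.keys m. Poly_Mapping.single (t \<otimes>\<^bsub>G\<^esub> fst v, snd v) (Poly_Mapping.lookup m v))"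

definition dpoly_act :: "('g, 'b) monoid_scheme \<Rightarrow> ('g \<Rightarrow> 'a::comm_ring_1 \<Rightarrow> 'a) \<Rightarrow> 'g \<Rightarrow> ('g, 'a) dpoly \<Rightarrow> ('g, 'a) dpoly" where
  "dpoly_act G act t p = (\<Sum>m\<in>Poly_Mapping.keys p. Poly_Mapping.single (mono_act G t m) (act t (Poly_Mapping.lookup p m)))"

text \<open>Points of A^n: functions nat \<Rightarrow> 'a vanishing from index n on.\<close>
definition points :: "nat \<Rightarrow> (nat \<Rightarrow> 'a::zero) set" where
  "points n = {a. \<forall>i\<ge>n. a i = 0}"

definition dpoly_eval :: "('g \<Rightarrow> 'a::comm_ring_1 \<Rightarrow> 'a) \<Rightarrow> ('g, 'a) dpoly \<Rightarrow> (nat \<Rightarrow> 'a) \<Rightarrow> 'a" where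
  "dpoly_eval act p a = (\<Sum>m\<in>Poly_Mapping.keys p. Poly_Mapping.lookup p m * (\<Prod>v\<in>Poly_Mapping.keys m. act (fst v) (a (snd v)) ^ Poly_Mapping.lookup m v))"

definition dV :: "('g \<Rightarrow> 'a::comm_ring_1 \<Rightarrow> 'a) \<Rightarrow> nat \<Rightarrow> ('g, 'a) dpoly set \<Rightarrow> (nat \<Rightarrow> 'a) set" where
  "dV act n E = {a \<in> points n. \<forall>f\<in>E. dpoly_eval act f a = 0}"

definition dI :: "('g, 'b) monoid_scheme \<Rightarrow> ('g \<Rightarrow> 'a::comm_ring_1 \<Rightarrow> 'a) \<Rightarrow> nat \<Rightarrow> (nat \<Rightarrow> 'a) set \<Rightarrow> ('g, 'a) dpoly set" where
  "dI G act n X = {f \<in> dpolys G n. \<forall>a\<in>X. dpoly_eval act f a = 0}"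

definition stable_ideal_R :: "('g, 'b) monoid_scheme \<Rightarrow> ('g \<Rightarrow> 'a::comm_ring_1 \<Rightarrow> 'a) \<Rightarrow> nat \<Rightarrow> ('g, 'a) dpoly set \<Rightarrow> bool" where
  "stable_ideal_R G act n I \<longleftrightarrow> is_ideal_in (dpolys G n) I \<and>
     (\<forall>t\<in>carrier G. \<forall>p\<in>I. dpoly_act G act t p \<in> I)"

definition difference_closed :: "('g, 'b) monoid_scheme \<Rightarrow> ('g \<Rightarrow> 'a::comm_ring_1 \<Rightarrow> 'a) \<Rightarrow> bool" where
  "difference_closed G act \<longleftrightarrow> pseudofield G act \<and>
     (\<forall>n I. stable_ideal_R G act n I \<longrightarrow> radical_in (dpolys G n) I = dI G act n (dV act n I))"

definition pseudovariety :: "('g, 'b) monoid_scheme \<Rightarrow> ('g \<Rightarrow> 'a::comm_ring_1 \<Rightarrow> 'a) \<Rightarrow> nat \<Rightarrow> (nat \<Rightarrow> 'a) set \<Rightarrow> bool" where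
  "pseudovariety G act n X \<longleftrightarrow> (\<exists>E\<subseteq>dpolys G n. X = dV act n E)"

definition open_in_pv :: "('g, 'b) monoid_scheme \<Rightarrow> ('g \<Rightarrow> 'a::comm_ring_1 \<Rightarrow> 'a) \<Rightarrow> nat \<Rightarrow> (nat \<Rightarrow> 'a) set \<Rightarrow> (nat \<Rightarrow> 'a) set \<Rightarrow> bool" where
  "open_in_pv G act n X U \<longleftrightarrow> (\<exists>E'\<subseteq>dpolys G n. U = X - dV act n E')"

definition regular_at :: "('g, 'b) monoid_scheme \<Rightarrow> ('g \<Rightarrow> 'a::comm_ring_1 \<Rightarrow> 'a) \<Rightarrow> nat \<Rightarrow> (nat \<Rightarrow> 'a) set
     \<Rightarrow> ((nat \<Rightarrow> 'a) \<Rightarrow> 'a) \<Rightarrow> (nat \<Rightarrow> 'a) \<Rightarrow> bool" where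
  "regular_at G act n X f x \<longleftrightarrow> (\<exists>U h g. open_in_pv G act n X U \<and> x \<in> U \<and>
     h \<in> dpolys G n \<and> g \<in> dpolys G n \<and>
     (\<forall>y\<in>U. dpoly_eval act g y dvd 1 \<and> f y * dpoly_eval act g y = dpoly_eval act h y))"

end

theory Submission
  imports Defs
begin


definition dmon :: "('g \<Rightarrow> 'a::comm_ring_1 \<Rightarrow> 'a) \<Rightarrow> (('g \<times> nat) \<Rightarrow>\<^sub>0 nat) \<Rightarrow> (nat \<Rightarrow> 'a) \<Rightarrow> 'a" where
  "dmon act m a = (\<Prod>v\<in>Poly_Mapping.keys m. act (fst v) (a (snd v)) ^ Poly_Mapping.lookup m v)"

lemma eval_superset:
  assumes "finite S" "Poly_Mapping.keys p \<subseteq> S"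
  shows "dpoly_eval act p a = (\<Sum>m\<in>S. Poly_Mapping.lookup p m * dmon act m a)"
  unfolding dpoly_eval_def dmon_def
  by (rule sum.mono_neutral_left[OF assms(1,2)]) (auto simp: not_in_keys_iff_lookup_eq_zero)

lemma mon_superset:
  assumes "finite S" "Poly_Mapping.keys m \<subseteq> S"
  shows "dmon act m a = (\<Prod>v\<in>S. act (fst v) (a (snd v)) ^ Poly_Mapping.lookup m v)"
  unfolding dmon_def
  by (rule prod.mono_neutral_left[OF assms(1,2)]) (auto simp: not_in_keys_iff_lookup_eq_zero)

lemma mon_zero[simp]: "dmon act 0 a = 1"
  by (simp add: dmon_def)

lemma mon_add: "dmon act (m1 + m2) a = dmon act m1 a * dmon act m2 a"
proof -
  let ?S = "Poly_Mapping.keys m1 \<union> Poly_Mapping.keys m2"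
  have "dmon act (m1 + m2) a = (\<Prod>v\<in>?S. act (fst v) (a (snd v)) ^ Poly_Mapping.lookup (m1+m2) v)"
    by (rule mon_superset) (auto simp: keys_add)
  also have "\<dots> = (\<Prod>v\<in>?S. act (fst v) (a (snd v)) ^ Poly_Mapping.lookup m1 v * act (fst v) (a (snd v)) ^ Poly_Mapping.lookup m2 v)"
    by (simp add: lookup_add power_add)
  also have "\<dots> = dmon act m1 a * dmon act m2 a"
    by (simp add: prod.distrib mon_superset[of ?S m1] mon_superset[of ?S m2])
  finally show ?thesis .
qed

lemma mon_sum: "dmon act (\<Sum>i\<in>S. m i) a = (\<Prod>i\<in>S. dmon act (m i) a)"
  by (induction S rule: infinite_finite_induct) (auto simp: mon_add)

lemma mon_single: "dmon act (Poly_Mapping.single w k) a = act (fst w) (a (snd w)) ^ k"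
  by (simp add: dmon_def)

lemma eval_zero[simp]: "dpoly_eval act 0 a = 0"
  by (simp add: dpoly_eval_def)

lemma eval_add: "dpoly_eval act (p + q) a = dpoly_eval act p a + dpoly_eval act q a"
proof -
  let ?S = "Poly_Mapping.keys p \<union> Poly_Mapping.keys q"
  have "dpoly_eval act (p + q) a = (\<Sum>m\<in>?S. Poly_Mapping.lookup (p+q) m * dmon act m a)"
    by (rule eval_superset) (auto simp: keys_add)
  also have "\<dots> = dpoly_eval act p a + dpoly_eval act q a"
    by (simp add: lookup_add distrib_right sum.distrib eval_superset[of ?S p] eval_superset[of ?S q])
  finally show ?thesis .
qed

lemma eval_sum: "dpoly_eval act (\<Sum>i\<in>S. p i) a = (\<Sum>i\<in>S. dpoly_eval act (p i) a)"
  by (induction S rule: infinite_finite_induct) (auto simp: eval_add)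

lemma eval_single: "dpoly_eval act (Poly_Mapping.single m c) a = c * dmon act m a"
  by (simp add: dpoly_eval_def dmon_def)

lemma eval_uminus: "dpoly_eval act (- p) a = - dpoly_eval act p a"
proof -
  have "dpoly_eval act (- p) a = (\<Sum>m\<in>Poly_Mapping.keys p. Poly_Mapping.lookup (-p) m * dmon act m a)"
    by (rule eval_superset) (auto simp: in_keys_iff)
  then show ?thesis by (simp add: dpoly_eval_def sum_negf)
qed

lemma poly_expand: "p = (\<Sum>m\<in>Poly_Mapping.keys p. Poly_Mapping.single m (Poly_Mapping.lookup p m))"
proof (rule poly_mapping_eqI)
  fix k
  show "Poly_Mapping.lookup p k = Poly_Mapping.lookup (\<Sum>m\<in>Poly_Mapping.keys p. Poly_Mapping.single m (Poly_Mapping.lookup p m)) k"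
    by (cases "k \<in> Poly_Mapping.keys p")
       (auto simp: lookup_sum lookup_single when_def not_in_keys_iff_lookup_eq_zero)
qed

lemma eval_mult: "dpoly_eval act (p * q) a = dpoly_eval act p a * dpoly_eval act q a"
proof -
  let ?P = "Poly_Mapping.keys p" and ?Q = "Poly_Mapping.keys q"
  have "p * q = (\<Sum>m\<in>?P. Poly_Mapping.single m (Poly_Mapping.lookup p m)) * (\<Sum>m'\<in>?Q. Poly_Mapping.single m' (Poly_Mapping.lookup q m'))"
    using poly_expand[of p] poly_expand[of q] by simp
  also have "\<dots> = (\<Sum>m\<in>?P. \<Sum>m'\<in>?Q. Poly_Mapping.single (m + m') (Poly_Mapping.lookup p m * Poly_Mapping.lookup q m'))"
    by (simp add: sum_product mult_single)
  finally have "dpoly_eval act (p * q) a = (\<Sum>m\<in>?P. \<Sum>m'\<in>?Q. Poly_Mapping.lookup p m * Poly_Mapping.lookup q m' * dmon act (m + m') a)"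
    by (simp add: eval_sum eval_single)
  also have "\<dots> = (\<Sum>m\<in>?P. \<Sum>m'\<in>?Q. (Poly_Mapping.lookup p m * dmon act m a) * (Poly_Mapping.lookup q m' * dmon act m' a))"
    by (simp add: mon_add ac_simps)
  also have "\<dots> = dpoly_eval act p a * dpoly_eval act q a"
    by (simp add: dpoly_eval_def dmon_def sum_product)
  finally show ?thesis .
qed

lemma eval_one: "dpoly_eval act 1 a = 1"
  using eval_single[of act 0 1 a] by simp

lemma eval_prod: "dpoly_eval act (\<Prod>i\<in>S. p i) a = (\<Prod>i\<in>S. dpoly_eval act (p i) a)"
  by (induction S rule: infinite_finite_induct) (auto simp: eval_mult eval_one)



lemma ra_add: "ring_aut s \<Longrightarrow> s (x + y) = s x + s y"
  unfolding ring_aut_def by blast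
lemma ra_0: "ring_aut s \<Longrightarrow> s 0 = 0"
proof -
  assume r: "ring_aut s"
  have "s 0 + s 0 = s 0 + 0" using ra_add[OF r, of 0 0] by simp
  then show ?thesis by (rule add_left_imp_eq)
qed
lemma ra_mult: "ring_aut s \<Longrightarrow> s (x * y) = s x * s y"
  unfolding ring_aut_def by blast
lemma ra_1: "ring_aut s \<Longrightarrow> s 1 = 1"
  unfolding ring_aut_def by blast
lemma ra_uminus: "ring_aut s \<Longrightarrow> s (- x) = - s x"
proof -
  assume r: "ring_aut s"
  have "s (- x) + s x = 0" using ra_add[OF r, of "-x" x] ra_0[OF r] by simp
  then show ?thesis by (simp add: eq_neg_iff_add_eq_0)
qed
lemma ra_sum: "ring_aut s \<Longrightarrow> s (\<Sum>i\<in>S. g i) = (\<Sum>i\<in>S. s (g i))"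
  by (induction S rule: infinite_finite_induct) (auto simp: ra_0 ra_add)
lemma ra_prod: "ring_aut s \<Longrightarrow> s (\<Prod>i\<in>S. g i) = (\<Prod>i\<in>S. s (g i))"
  by (induction S rule: infinite_finite_induct) (auto simp: ra_1 ra_mult)
lemma ra_power: "ring_aut s \<Longrightarrow> s (x ^ k) = s x ^ k"
  by (induction k) (auto simp: ra_1 ra_mult)
lemma ra_inj: "ring_aut s \<Longrightarrow> s x = 0 \<longleftrightarrow> x = 0"
proof -
  assume r: "ring_aut s"
  then have "inj s" unfolding ring_aut_def bij_def by blast
  then show ?thesis using ra_0[OF r] by (metis injD)
qed

lemma keys_sum: "Poly_Mapping.keys (\<Sum>i\<in>S. g i) \<subseteq> (\<Union>i\<in>S. Poly_Mapping.keys (g i))"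
proof (induction S rule: infinite_finite_induct)
  case (insert x F)
  then show ?case using keys_add[of "g x" "sum g F"] by auto
qed auto

lemma dpolys_add: "p \<in> dpolys G n \<Longrightarrow> q \<in> dpolys G n \<Longrightarrow> p + q \<in> dpolys G n"
  unfolding dpolys_def using keys_add[of p q] by blast
lemma dpolys_zero: "0 \<in> dpolys G n"
  unfolding dpolys_def by simp
lemma dpolys_one: "1 \<in> dpolys G n"
  unfolding dpolys_def by simp
lemma dpolys_uminus: "p \<in> dpolys G n \<Longrightarrow> - p \<in> dpolys G n"
  unfolding dpolys_def by (simp add: in_keys_iff)
lemma dpolys_mult: "p \<in> dpolys G n \<Longrightarrow> q \<in> dpolys G n \<Longrightarrow> p * q \<in> dpolys G n"
  unfolding dpolys_def
proof (intro CollectI ballI)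
  fix m v assume p: "p \<in> {p. \<forall>m\<in>Poly_Mapping.keys p. \<forall>v\<in>Poly_Mapping.keys m. fst v \<in> carrier G \<and> snd v < n}"
    and q: "q \<in> {p. \<forall>m\<in>Poly_Mapping.keys p. \<forall>v\<in>Poly_Mapping.keys m. fst v \<in> carrier G \<and> snd v < n}"
    and m: "m \<in> Poly_Mapping.keys (p * q)" and v: "v \<in> Poly_Mapping.keys m"
  obtain a b where ab: "m = a + b" "a \<in> Poly_Mapping.keys p" "b \<in> Poly_Mapping.keys q"
    using keys_mult[of p q] m by blast
  have "v \<in> Poly_Mapping.keys a \<or> v \<in> Poly_Mapping.keys b" using keys_add[of a b] v ab(1) by blast
  then show "fst v \<in> carrier G \<and> snd v < n" using p q ab by blast
qed
lemma dpolys_const: "Poly_Mapping.single 0 c \<in> dpolys G n"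
  unfolding dpolys_def by simp
lemma dpolys_sum: "(\<And>i. i \<in> S \<Longrightarrow> g i \<in> dpolys G n) \<Longrightarrow> (\<Sum>i\<in>S. g i) \<in> dpolys G n"
  by (induction S rule: infinite_finite_induct) (auto simp: dpolys_zero dpolys_add)
lemma dpolys_prod: "(\<And>i. i \<in> S \<Longrightarrow> g i \<in> dpolys G n) \<Longrightarrow> (\<Prod>i\<in>S. g i) \<in> dpolys G n"
  by (induction S rule: infinite_finite_induct) (auto simp: dpolys_one dpolys_mult)

lemma dpolys_act:
  assumes "group G" "t \<in> carrier G" "p \<in> dpolys G n"
  shows "dpoly_act G act t p \<in> dpolys G n"
proof -
  have "Poly_Mapping.keys (dpoly_act G act t p) \<subseteq> mono_act G t ` Poly_Mapping.keys p"
    unfolding dpoly_act_def by (rule order_trans[OF keys_sum]) auto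
  moreover have "Poly_Mapping.keys (mono_act G t m) \<subseteq> (\<lambda>v. (t \<otimes>\<^bsub>G\<^esub> fst v, snd v)) ` Poly_Mapping.keys m" for m
    unfolding mono_act_def by (rule order_trans[OF keys_sum]) auto
  ultimately show ?thesis unfolding dpolys_def
  proof (intro CollectI ballI)
    fix m v assume A: "\<And>m. Poly_Mapping.keys (mono_act G t m) \<subseteq> (\<lambda>v. (t \<otimes>\<^bsub>G\<^esub> fst v, snd v)) ` Poly_Mapping.keys m"
      and B: "Poly_Mapping.keys (dpoly_act G act t p) \<subseteq> mono_act G t ` Poly_Mapping.keys p"
      and m: "m \<in> Poly_Mapping.keys (dpoly_act G act t p)" and v: "v \<in> Poly_Mapping.keys m"
    obtain m0 where m0: "m0 \<in> Poly_Mapping.keys p" "m = mono_act G t m0" using B m by blast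
    obtain v0 where v0: "v0 \<in> Poly_Mapping.keys m0" "v = (t \<otimes>\<^bsub>G\<^esub> fst v0, snd v0)" using A[of m0] v m0 by blast
    have "fst v0 \<in> carrier G" "snd v0 < n" using assms(3) m0 v0 unfolding dpolys_def by auto
    then show "fst v \<in> carrier G \<and> snd v < n" using v0 assms(1,2) by (simp add: group.is_monoid monoid.m_closed)
  qed
qed

lemma eval_act:
  assumes "difference_ring G act" "t \<in> carrier G" "p \<in> dpolys G n"
  shows "dpoly_eval act (dpoly_act G act t p) y = act t (dpoly_eval act p y)"
proof -
  have ra: "ring_aut (act s)" if "s \<in> carrier G" for s
    using assms(1) that unfolding difference_ring_def by blast
  have grp: "group G" using assms(1) unfolding difference_ring_def by blast
  have comp: "act (s \<otimes>\<^bsub>G\<^esub> s') = act s \<circ> act s'" if "s \<in> carrier G" "s' \<in> carrier G" for s s'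
    using assms(1) that unfolding difference_ring_def by blast
  have dmon: "dmon act (mono_act G t m) y = act t (dmon act m y)" if "m \<in> Poly_Mapping.keys p" for m
  proof -
    have "dmon act (mono_act G t m) y = (\<Prod>v\<in>Poly_Mapping.keys m. act (t \<otimes>\<^bsub>G\<^esub> fst v) (y (snd v)) ^ Poly_Mapping.lookup m v)"
      unfolding mono_act_def by (simp add: mon_sum mon_single)
    also have "\<dots> = (\<Prod>v\<in>Poly_Mapping.keys m. act t (act (fst v) (y (snd v)) ^ Poly_Mapping.lookup m v))"
      using that assms(3) unfolding dpolys_def
      by (intro prod.cong refl) (simp add: comp assms(2) ra_power ra assms)
    also have "\<dots> = act t (dmon act m y)"
      unfolding dmon_def by (simp add: ra_prod ra assms(2))
    finally show ?thesis .
  qed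
  have "dpoly_eval act (dpoly_act G act t p) y = (\<Sum>m\<in>Poly_Mapping.keys p. act t (Poly_Mapping.lookup p m) * dmon act (mono_act G t m) y)"
    unfolding dpoly_act_def by (simp add: eval_sum eval_single)
  also have "\<dots> = (\<Sum>m\<in>Poly_Mapping.keys p. act t (Poly_Mapping.lookup p m * dmon act m y))"
    by (intro sum.cong refl) (simp add: dmon ra_mult ra assms(2))
  also have "\<dots> = act t (dpoly_eval act p y)"
    unfolding dpoly_eval_def dmon_def by (simp add: ra_sum ra assms(2))
  finally show ?thesis .
qed



lemma units_prod: "(\<And>i. i \<in> S \<Longrightarrow> (g i::'a::comm_semiring_1) dvd 1) \<Longrightarrow> (\<Prod>i\<in>S. g i) dvd 1"
proof (induction S rule: infinite_finite_induct)
  case (insert x F)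
  then have "g x dvd 1" "(\<Prod>i\<in>F. g i) dvd 1" by auto
  then show ?case using insert(1,2) mult_dvd_mono[of "g x" 1 "prod g F" 1] by simp
qed auto

lemma grp_bij: "group G \<Longrightarrow> t \<in> carrier G \<Longrightarrow> bij_betw (\<lambda>x. t \<otimes>\<^bsub>G\<^esub> x) (carrier G) (carrier G)"
  unfolding bij_betw_def
proof (intro conjI group.inj_on_cmult, assumption+)
  assume g: "group G" and t: "t \<in> carrier G"
  show "(\<lambda>x. t \<otimes>\<^bsub>G\<^esub> x) ` carrier G = carrier G"
  proof
    show "(\<lambda>x. t \<otimes>\<^bsub>G\<^esub> x) ` carrier G \<subseteq> carrier G" using g t by (auto simp: group.is_monoid monoid.m_closed)
    show "carrier G \<subseteq> (\<lambda>x. t \<otimes>\<^bsub>G\<^esub> x) ` carrier G"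
    proof
      fix y assume y: "y \<in> carrier G"
      have "y = t \<otimes>\<^bsub>G\<^esub> (inv\<^bsub>G\<^esub> t \<otimes>\<^bsub>G\<^esub> y)" using g t y
        by (simp add: group.inv_closed group.is_monoid monoid.m_assoc[symmetric] group.r_inv monoid.l_one)
      then show "y \<in> (\<lambda>x. t \<otimes>\<^bsub>G\<^esub> x) ` carrier G" using g t y by (auto simp: group.is_monoid monoid.m_closed group.inv_closed)
    qed
  qed
qed

lemma orbit_unit:
  assumes pf: "pseudofield G act" and fin: "finite (carrier G)" and a: "a \<noteq> 0"
  shows "\<exists>c. (\<Sum>s\<in>carrier G. c s * act s a) = 1"
proof -
  have dr: "difference_ring G act" and st: "\<forall>I. stable_ideal_A G act I \<longrightarrow> I = {0} \<or> I = UNIV"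
    using pf unfolding pseudofield_def by auto
  have grp: "group G" and ra: "\<And>s. s \<in> carrier G \<Longrightarrow> ring_aut (act s)" and one: "act \<one>\<^bsub>G\<^esub> = id"
    and comp: "\<And>s s'. s \<in> carrier G \<Longrightarrow> s' \<in> carrier G \<Longrightarrow> act (s \<otimes>\<^bsub>G\<^esub> s') = act s \<circ> act s'"
    using dr unfolding difference_ring_def by auto
  define I where "I = {x. \<exists>c. x = (\<Sum>s\<in>carrier G. c s * act s a)}"
  have "stable_ideal_A G act I"
    unfolding stable_ideal_A_def is_ideal_in_def
  proof (intro conjI ballI)
    show "0 \<in> I" unfolding I_def by (rule CollectI, rule exI[of _ "\<lambda>_. 0"]) simp
    fix x assume "x \<in> I" then obtain c where c: "x = (\<Sum>s\<in>carrier G. c s * act s a)" unfolding I_def by blast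
    show "- x \<in> I" unfolding I_def using c by (intro CollectI exI[of _ "\<lambda>s. - c s"]) (simp add: sum_negf)
    { fix r show "r * x \<in> I" unfolding I_def using c
        by (intro CollectI exI[of _ "\<lambda>s. r * c s"]) (simp add: sum_distrib_left mult.assoc) }
    { fix y assume "y \<in> I" then obtain d where d: "y = (\<Sum>s\<in>carrier G. d s * act s a)" unfolding I_def by blast
      show "x + y \<in> I" unfolding I_def using c d
        by (intro CollectI exI[of _ "\<lambda>s. c s + d s"]) (simp add: sum.distrib distrib_right) }
    { fix t assume t: "t \<in> carrier G"
      have "act t x = (\<Sum>s\<in>carrier G. act t (c s) * act (t \<otimes>\<^bsub>G\<^esub> s) a)"
        using c t by (simp add: ra_sum ra_mult ra comp)
      also have "\<dots> = (\<Sum>s\<in>carrier G. (\<lambda>s'. act t (c (inv\<^bsub>G\<^esub> t \<otimes>\<^bsub>G\<^esub> s')) * act s' a) (t \<otimes>\<^bsub>G\<^esub> s))"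
        using grp t by (intro sum.cong refl) (simp add: group.is_monoid monoid.m_assoc[symmetric] group.inv_closed group.l_inv monoid.l_one)
      also have "\<dots> = (\<Sum>s'\<in>carrier G. act t (c (inv\<^bsub>G\<^esub> t \<otimes>\<^bsub>G\<^esub> s')) * act s' a)"
        by (rule sum.reindex_bij_betw[OF grp_bij[OF grp t]])
      finally show "act t x \<in> I" unfolding I_def
        by (intro CollectI exI[of _ "\<lambda>s'. act t (c (inv\<^bsub>G\<^esub> t \<otimes>\<^bsub>G\<^esub> s'))"]) }
  qed simp
  moreover have "a \<in> I"
  proof -
    have "(\<Sum>s\<in>carrier G. (if s = \<one>\<^bsub>G\<^esub> then 1 else 0) * act s a) = (\<Sum>s\<in>carrier G. if s = \<one>\<^bsub>G\<^esub> then act s a else 0)"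
      by (intro sum.cong refl) simp
    also have "\<dots> = a" using fin grp one by (simp add: group.is_monoid monoid.one_closed)
    finally have "a = (\<Sum>s\<in>carrier G. (if s = \<one>\<^bsub>G\<^esub> then 1 else 0) * act s a)" by simp
    then show ?thesis unfolding I_def by (intro CollectI exI)
  qed
  ultimately have "I = {0} \<or> I = UNIV" using st by blast
  then have "I = UNIV" using \<open>a \<in> I\<close> a by blast
  then have "1 \<in> I" by simp
  then obtain c where "1 = (\<Sum>s\<in>carrier G. c s * act s a)" unfolding I_def by blast
  then show ?thesis by (intro exI[of _ c]) simp
qed


theorem theorem4p30:
  fixes G :: "('g, 'b) monoid_scheme" and act :: "'g \<Rightarrow> 'a::comm_ring_1 \<Rightarrow> 'a"
    and n :: nat and X :: "(nat \<Rightarrow> 'a) set" and f :: "(nat \<Rightarrow> 'a) \<Rightarrow> 'a"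
  assumes "finite (carrier G)"
    and "difference_closed G act"
    and "pseudovariety G act n X"
    and "\<forall>x\<in>X. regular_at G act n X f x"
  shows "\<exists>p\<in>dpolys G n. \<forall>x\<in>X. f x = dpoly_eval act p x"
proof -
  note fin = assms(1)
  have pf: "pseudofield G act"
    and nss: "\<And>n I. stable_ideal_R G act n I \<Longrightarrow> radical_in (dpolys G n) I = dI G act n (dV act n I)"
    using assms(2) unfolding difference_closed_def by auto
  have dr: "difference_ring G act" using pf unfolding pseudofield_def by auto
  have grp: "group G" and ra: "\<And>s. s \<in> carrier G \<Longrightarrow> ring_aut (act s)" and one: "act \<one>\<^bsub>G\<^esub> = id"
    and comp: "\<And>s s'. s \<in> carrier G \<Longrightarrow> s' \<in> carrier G \<Longrightarrow> act (s \<otimes>\<^bsub>G\<^esub> s') = act s \<circ> act s'"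
    using dr unfolding difference_ring_def by auto
  have onec: "\<one>\<^bsub>G\<^esub> \<in> carrier G" using grp by (simp add: group.is_monoid monoid.one_closed)
  have mcl: "\<And>s s'. s \<in> carrier G \<Longrightarrow> s' \<in> carrier G \<Longrightarrow> s \<otimes>\<^bsub>G\<^esub> s' \<in> carrier G"
    using grp by (simp add: group.is_monoid monoid.m_closed)
  show ?thesis
  proof (cases "(1::'a) = 0")
    case True
    then have z: "\<And>x::'a. x = 0" by (metis mult_1 mult_zero_left)
    show ?thesis by (intro bexI[of _ 0] dpolys_zero) (metis z)
  next
    case False
    obtain E where E: "E \<subseteq> dpolys G n" "X = dV act n E"
      using assms(3) unfolding pseudovariety_def by blast
    have Xp: "X \<subseteq> points n" using E(2) unfolding dV_def by auto
    define Q where "Q = {p \<in> dpolys G n. \<forall>s\<in>carrier G. \<exists>q\<in>dpolys G n. \<forall>y\<in>X.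
        act s (dpoly_eval act p y) * f y = dpoly_eval act q y}"
    have ideal: "is_ideal_in (dpolys G n) Q"
      unfolding is_ideal_in_def
    proof (intro conjI ballI)
      show "Q \<subseteq> dpolys G n" unfolding Q_def by blast
      show "0 \<in> Q" unfolding Q_def
        by (auto simp: dpolys_zero ra_0 ra intro!: bexI[of _ 0])
      fix x assume x: "x \<in> Q"
      show "- x \<in> Q" unfolding Q_def
      proof (intro CollectI conjI ballI)
        show "- x \<in> dpolys G n" using x unfolding Q_def by (simp add: dpolys_uminus)
        fix s assume s: "s \<in> carrier G"
        then obtain q where q: "q \<in> dpolys G n" "\<forall>y\<in>X. act s (dpoly_eval act x y) * f y = dpoly_eval act q y"
          using x unfolding Q_def by blast
        show "\<exists>q\<in>dpolys G n. \<forall>y\<in>X. act s (dpoly_eval act (- x) y) * f y = dpoly_eval act q y"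
          using q s by (intro bexI[of _ "- q"]) (auto simp: eval_uminus ra_uminus ra dpolys_uminus)
      qed
      { fix y assume y: "y \<in> Q"
        show "x + y \<in> Q" unfolding Q_def
        proof (intro CollectI conjI ballI)
          show "x + y \<in> dpolys G n" using x y unfolding Q_def by (simp add: dpolys_add)
          fix s assume s: "s \<in> carrier G"
          obtain q where q: "q \<in> dpolys G n" "\<forall>z\<in>X. act s (dpoly_eval act x z) * f z = dpoly_eval act q z"
            using x s unfolding Q_def by blast
          obtain q' where q': "q' \<in> dpolys G n" "\<forall>z\<in>X. act s (dpoly_eval act y z) * f z = dpoly_eval act q' z"
            using y s unfolding Q_def by blast
          show "\<exists>q\<in>dpolys G n. \<forall>z\<in>X. act s (dpoly_eval act (x + y) z) * f z = dpoly_eval act q z"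
            using q q' s by (intro bexI[of _ "q + q'"]) (auto simp: eval_add ra_add ra dpolys_add distrib_right)
        qed }
      { fix r :: "('g, 'a) dpoly" assume r: "r \<in> dpolys G n"
        show "r * x \<in> Q" unfolding Q_def
        proof (intro CollectI conjI ballI)
          show "r * x \<in> dpolys G n" using x r unfolding Q_def by (simp add: dpolys_mult)
          fix s assume s: "s \<in> carrier G"
          obtain q where q: "q \<in> dpolys G n" "\<forall>z\<in>X. act s (dpoly_eval act x z) * f z = dpoly_eval act q z"
            using x s unfolding Q_def by blast
          show "\<exists>q\<in>dpolys G n. \<forall>z\<in>X. act s (dpoly_eval act (r * x) z) * f z = dpoly_eval act q z"
          proof (intro bexI[of _ "dpoly_act G act s r * q"] ballI)
            fix z assume z: "z \<in> X"
            have "act s (dpoly_eval act (r * x) z) * f z = act s (dpoly_eval act r z) * (act s (dpoly_eval act x z) * f z)"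
              by (simp add: eval_mult ra_mult ra s mult.assoc)
            also have "\<dots> = dpoly_eval act (dpoly_act G act s r * q) z"
              using q z by (simp add: eval_mult eval_act[OF dr s r])
            finally show "act s (dpoly_eval act (r * x) z) * f z = dpoly_eval act (dpoly_act G act s r * q) z" .
          qed (simp add: dpolys_mult dpolys_act grp s r q)
        qed }
    qed
    have stab: "\<forall>t\<in>carrier G. \<forall>p\<in>Q. dpoly_act G act t p \<in> Q"
    proof (intro ballI)
      fix t p assume t: "t \<in> carrier G" and p: "p \<in> Q"
      have pd: "p \<in> dpolys G n" using p unfolding Q_def by blast
      show "dpoly_act G act t p \<in> Q" unfolding Q_def
      proof (intro CollectI conjI ballI)
        show "dpoly_act G act t p \<in> dpolys G n" by (rule dpolys_act[OF grp t pd])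
        fix s assume s: "s \<in> carrier G"
        obtain q where q: "q \<in> dpolys G n" "\<forall>z\<in>X. act (s \<otimes>\<^bsub>G\<^esub> t) (dpoly_eval act p z) * f z = dpoly_eval act q z"
          using p mcl[OF s t] unfolding Q_def by blast
        show "\<exists>q\<in>dpolys G n. \<forall>y\<in>X. act s (dpoly_eval act (dpoly_act G act t p) y) * f y = dpoly_eval act q y"
          using q by (intro bexI[of _ q]) (auto simp: eval_act[OF dr t pd] comp[OF s t])
      qed
    qed
    have sQ: "stable_ideal_R G act n Q" unfolding stable_ideal_R_def using ideal stab by blast
    have empty: "dV act n Q = {}"
    proof (rule ccontr)
      assume "dV act n Q \<noteq> {}"
      then obtain y where y: "y \<in> points n" "\<forall>p\<in>Q. dpoly_eval act p y = 0" unfolding dV_def by blast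
      show False
      proof (cases "y \<in> X")
        case False
        then obtain e where e: "e \<in> E" "dpoly_eval act e y \<noteq> 0" using E y(1) unfolding dV_def by blast
        have "e \<in> Q" unfolding Q_def
          using e E by (auto simp: dV_def ra_0 ra dpolys_zero intro!: bexI[of _ 0])
        then show False using y e by blast
      next
        case True
        obtain U h g where U: "open_in_pv G act n X U" "y \<in> U" "h \<in> dpolys G n" "g \<in> dpolys G n"
          "\<forall>z\<in>U. dpoly_eval act g z dvd 1 \<and> f z * dpoly_eval act g z = dpoly_eval act h z"
          using assms(4) True unfolding regular_at_def by blast
        obtain E' where E': "E' \<subseteq> dpolys G n" "U = X - dV act n E'" using U(1) unfolding open_in_pv_def by blast
        obtain e where e: "e \<in> E'" "dpoly_eval act e y \<noteq> 0" using E' U(2) y(1) unfolding dV_def by blast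
        have ed: "e \<in> dpolys G n" using e E' by blast
        obtain c where c: "(\<Sum>s\<in>carrier G. c s * act s (dpoly_eval act e y)) = 1"
          using orbit_unit[OF pf fin e(2)] by blast
        define S where "S = (\<Sum>s\<in>carrier G. Poly_Mapping.single 0 (c s) * dpoly_act G act s e)"
        have Sd: "S \<in> dpolys G n" unfolding S_def
          by (intro dpolys_sum dpolys_mult dpolys_const dpolys_act[OF grp _ ed])
        have evS: "dpoly_eval act S z = (\<Sum>s\<in>carrier G. c s * act s (dpoly_eval act e z))" for z
          unfolding S_def by (simp add: eval_sum eval_mult eval_single eval_act[OF dr _ ed])
        define p where "p = S * g"
        have pd: "p \<in> dpolys G n" unfolding p_def using Sd U(4) by (rule dpolys_mult)
        have pf_eq: "dpoly_eval act p z * f z = dpoly_eval act (S * h) z" if z: "z \<in> X" for z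
        proof (cases "z \<in> U")
          case True
          then have "f z * dpoly_eval act g z = dpoly_eval act h z" using U(5) by blast
          then show ?thesis unfolding p_def by (simp add: eval_mult mult.assoc mult.commute[of "f z"])
        next
          case False
          then have "dpoly_eval act e z = 0" using z E' e(1) unfolding dV_def by blast
          then have "dpoly_eval act S z = 0" unfolding evS by (simp add: ra_0 ra)
          then show ?thesis unfolding p_def by (simp add: eval_mult)
        qed
        define N where "N = (\<Prod>s\<in>carrier G. dpoly_act G act s p)"
        have evN: "dpoly_eval act N z = (\<Prod>s\<in>carrier G. act s (dpoly_eval act p z))" for z
          unfolding N_def by (simp add: eval_prod eval_act[OF dr _ pd])
        have "N \<in> Q" unfolding Q_def
        proof (intro CollectI conjI ballI)
          show Nd: "N \<in> dpolys G n" unfolding N_def by (intro dpolys_prod dpolys_act[OF grp _ pd])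
          fix t assume t: "t \<in> carrier G"
          let ?R = "S * h * (\<Prod>s\<in>carrier G - {\<one>\<^bsub>G\<^esub>}. dpoly_act G act s p)"
          show "\<exists>q\<in>dpolys G n. \<forall>z\<in>X. act t (dpoly_eval act N z) * f z = dpoly_eval act q z"
          proof (intro bexI[of _ ?R] ballI)
            show "?R \<in> dpolys G n"
              by (intro dpolys_mult Sd U(3) dpolys_prod dpolys_act[OF grp _ pd]) auto
            fix z assume z: "z \<in> X"
            have "act t (dpoly_eval act N z) = (\<Prod>s\<in>carrier G. act (t \<otimes>\<^bsub>G\<^esub> s) (dpoly_eval act p z))"
              unfolding evN by (simp add: ra_prod ra t comp)
            also have "\<dots> = (\<Prod>s\<in>carrier G. act s (dpoly_eval act p z))"
              by (rule prod.reindex_bij_betw[OF grp_bij[OF grp t], of "\<lambda>s. act s (dpoly_eval act p z)"])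
            also have "\<dots> = dpoly_eval act p z * (\<Prod>s\<in>carrier G - {\<one>\<^bsub>G\<^esub>}. act s (dpoly_eval act p z))"
              by (subst prod.remove[OF fin onec]) (simp add: one)
            finally have A: "act t (dpoly_eval act N z) * f z = (dpoly_eval act p z * f z) * (\<Prod>s\<in>carrier G - {\<one>\<^bsub>G\<^esub>}. act s (dpoly_eval act p z))"
              by (simp only: mult.assoc mult.commute[of "f z"])
            have B: "dpoly_eval act ?R z = dpoly_eval act (S * h) z * (\<Prod>s\<in>carrier G - {\<one>\<^bsub>G\<^esub>}. act s (dpoly_eval act p z))"
              by (simp only: eval_mult eval_prod) (intro arg_cong2[where f="(*)"] refl prod.cong, auto simp: eval_act[OF dr _ pd])
            show "act t (dpoly_eval act N z) * f z = dpoly_eval act ?R z"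
              unfolding A B pf_eq[OF z] ..
          qed
        qed
        moreover have "dpoly_eval act N y \<noteq> 0"
        proof
          assume N0: "dpoly_eval act N y = 0"
          have "dpoly_eval act p y = dpoly_eval act g y" unfolding p_def using c by (simp add: eval_mult evS)
          then have pu: "dpoly_eval act p y dvd 1" using U(2,5) by simp
          have "dpoly_eval act N y dvd 1" unfolding evN
          proof (rule units_prod)
            fix s assume s: "s \<in> carrier G"
            obtain w where "1 = dpoly_eval act p y * w" using pu by (auto elim: dvdE)
            then have "1 = act s (dpoly_eval act p y) * act s w" by (metis ra_1 ra_mult ra s)
            then show "act s (dpoly_eval act p y) dvd 1" by (metis dvdI)
          qed
          then show False using N0 False by simp
        qed
        ultimately show False using y by blast
      qed
    qed
    have "radical_in (dpolys G n) Q = dpolys G n"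
      using nss[OF sQ] unfolding empty dI_def by simp
    then obtain k where "1 ^ k \<in> Q" using dpolys_one unfolding radical_in_def by blast
    then have "1 \<in> Q" by simp
    then obtain q where q: "q \<in> dpolys G n" "\<forall>y\<in>X. act \<one>\<^bsub>G\<^esub> (dpoly_eval act 1 y) * f y = dpoly_eval act q y"
      using onec unfolding Q_def by blast
    show ?thesis using q by (intro bexI[of _ q]) (auto simp: eval_one one)
  qed
qed


end
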